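(* Let $a\ge 1$ and let $v_1,\dots,v_n$ be $a$-submodular valuations on a finite set of items $X=\{1,\dots,m\}$. Consider the greedy algorithm: start with $S_1=\dots=S_n=\emptyset$; for $x=1,\dots,m$ in turn, let $j$ be a bidder maximizing $v_j(S_j\cup\{x\})-v_j(S_j)$ and set $S_j\leftarrow S_j\cup\{x\}$. Then the resulting allocation satisfies $\sum_i v_i(S_i)\ge\frac{1}{1+a}\max\sum_i v_i(T_i)$, the maximum over all partitions $(T_1,\dots,T_n)$ of $X$; i.e., the greedy algorithm is a $(1+a)$-approximation.
   Context: A valuation on a finite set $X$ is a function $v:2^X\to\mathbb{R}_{\ge 0}$ with $v(\emptyset)=0$ and monotone under inclusion. For $W\subseteq X$, the marginal valuation is $v(A\mid W)=v(A\cup W)-v(W)$ for $A\subseteq X\setminus W$. A valuation $w$ exhibits $a$-bounded complementarities if $w(A\cup\{x\})\le w(A)+a\,w(\{x\})$ for every set $A$ and item $x$. A valuation $v$ is $a$-submodular if for every $W\subseteq X$ the marginal valuation $v(\cdot\mid W)$ exhibits $a$-bounded complementarities. *)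

theory Defs
  imports Complex_Main
begin

definition valuation :: "'a set \<Rightarrow> ('a set \<Rightarrow> real) \<Rightarrow> bool" where
  "valuation X v \<longleftrightarrow> v {} = 0 \<and> (\<forall>A. A \<subseteq> X \<longrightarrow> 0 \<le> v A)
     \<and> (\<forall>A B. A \<subseteq> B \<longrightarrow> B \<subseteq> X \<longrightarrow> v A \<le> v B)"

definition marginal :: "('a set \<Rightarrow> real) \<Rightarrow> 'a set \<Rightarrow> 'a set \<Rightarrow> real" where
  "marginal v W A = v (A \<union> W) - v W"

definition bounded_compl :: "real \<Rightarrow> 'a set \<Rightarrow> ('a set \<Rightarrow> real) \<Rightarrow> bool" where
  "bounded_compl a Y w \<longleftrightarrow> (\<forall>A x. A \<subseteq> Y \<longrightarrow> x \<in> Y \<longrightarrow> w (A \<union> {x}) \<le> w A + a * w {x})"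

definition a_submodular :: "real \<Rightarrow> 'a set \<Rightarrow> ('a set \<Rightarrow> real) \<Rightarrow> bool" where
  "a_submodular a X v \<longleftrightarrow> (\<forall>W. W \<subseteq> X \<longrightarrow> bounded_compl a (X - W) (marginal v W))"

text \<open>Possible states of the greedy algorithm with bidders 1..n after processing
  items 1..k (any tie-breaking among maximizing bidders).\<close>
inductive greedy_alloc :: "(nat \<Rightarrow> nat set \<Rightarrow> real) \<Rightarrow> nat \<Rightarrow> nat \<Rightarrow> (nat \<Rightarrow> nat set) \<Rightarrow> bool"
  for v :: "nat \<Rightarrow> nat set \<Rightarrow> real" and n :: nat where
  init: "greedy_alloc v n 0 (\<lambda>_. {})"
| step: "greedy_alloc v n k S \<Longrightarrow> j \<in> {1..n} \<Longrightarrow>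
     (\<forall>i\<in>{1..n}. v i (S i \<union> {Suc k}) - v i (S i) \<le> v j (S j \<union> {Suc k}) - v j (S j)) \<Longrightarrow>
     greedy_alloc v n (Suc k) (S(j := S j \<union> {Suc k}))"

end

theory Submission
  imports Defs
begin

lemma sum_change_one:
  fixes f g :: "nat \<Rightarrow> real"
  assumes "l \<in> A" "finite A" "\<forall>i\<in>A. i \<noteq> l \<longrightarrow> g i = f i"
  shows "sum g A = sum f A + (g l - f l)"
proof -
  have "sum g A = g l + sum g (A - {l})" using assms by (simp add: sum.remove)
  moreover have "sum f A = f l + sum f (A - {l})" using assms by (simp add: sum.remove)
  moreover have "sum g (A - {l}) = sum f (A - {l})" using assms by (intro sum.cong) auto
  ultimately show ?thesis by simp
qed

lemma asub:
  assumes "a_submodular a X v" "W \<subseteq> B" "B \<subseteq> X" "x \<in> X" "x \<notin> W"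
  shows "v (B \<union> {x}) - v B \<le> a * (v (W \<union> {x}) - v W)"
proof -
  have "bounded_compl a (X - W) (marginal v W)" using assms unfolding a_submodular_def by blast
  hence bc: "\<forall>A y. A \<subseteq> X - W \<longrightarrow> y \<in> X - W \<longrightarrow> marginal v W (A \<union> {y}) \<le> marginal v W A + a * marginal v W {y}"
    unfolding bounded_compl_def .
  have h1: "B - W \<subseteq> X - W" and h2: "x \<in> X - W" using assms by auto
  have "marginal v W ((B - W) \<union> {x}) \<le> marginal v W (B - W) + a * marginal v W {x}"
    using bc[rule_format, OF h1 h2] .
  moreover have "(B - W) \<union> {x} \<union> W = B \<union> {x}" "(B - W) \<union> W = B" "{x} \<union> W = W \<union> {x}" using assms by auto
  ultimately show ?thesis unfolding marginal_def by simp
qed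

lemma val_mono: "valuation X v \<Longrightarrow> A \<subseteq> B \<Longrightarrow> B \<subseteq> X \<Longrightarrow> v A \<le> v B"
  unfolding valuation_def by blast

lemma val_empty: "valuation X v \<Longrightarrow> v {} = 0"
  unfolding valuation_def by blast

lemma sub_Suc: "A \<subseteq> {1..Suc k} \<Longrightarrow> Suc k \<notin> A \<Longrightarrow> A \<subseteq> {1..k}"
proof
  fix y assume "A \<subseteq> {1..Suc k}" "Suc k \<notin> A" "y \<in> A"
  then have "1 \<le> y" "y \<le> Suc k" "y \<noteq> Suc k" by auto
  then show "y \<in> {1..k}" by simp
qed

lemma greedy_sub: "greedy_alloc v n k S \<Longrightarrow> S i \<subseteq> {1..k}"
  by (induction rule: greedy_alloc.induct) auto

lemma inv:
  assumes "greedy_alloc v n k S" "k \<le> m" "a \<ge> 0"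
   "\<forall>i\<in>{1..n}. valuation {1..m} (v i) \<and> a_submodular a {1..m} (v i)"
  shows "\<forall>B T. (\<forall>i\<in>{1..n}. S i \<subseteq> B i \<and> B i \<subseteq> {1..m} \<and> T i \<subseteq> {1..k})
      \<and> (\<forall>i\<in>{1..n}. \<forall>j\<in>{1..n}. i\<noteq>j \<longrightarrow> T i \<inter> T j = {}) \<longrightarrow>
     (\<Sum>i=1..n. v i (B i \<union> T i) - v i (B i)) \<le> a * (\<Sum>i=1..n. v i (S i))"
  using assms
proof induction
  case init
  have "v i {} = 0" if "i \<in> {1..n}" for i using init that val_empty by blast
  then show ?case by auto
next
  case (step k S j)
  define x where "x = Suc k"
  have km: "k \<le> m" "x \<le> m" "x \<in> {1..m}" using step x_def by auto
  note IH = step.IH[OF km(1) step.prems(2,3)]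
  have Ssub: "\<And>i. S i \<subseteq> {1..k}" using greedy_sub[OF step.hyps(1)] .
  have xS: "\<And>i. x \<notin> S i" using Ssub x_def by (meson atLeastAtMost_iff lessI not_less subsetD)
  have gr: "\<forall>i\<in>{1..n}. v i (S i \<union> {x}) - v i (S i) \<le> v j (S j \<union> {x}) - v j (S j)"
    using step.hyps(3) x_def by simp
  have sumS: "(\<Sum>i=1..n. v i ((S(j := S j \<union> {x})) i)) = (\<Sum>i=1..n. v i (S i)) + (v j (S j \<union> {x}) - v j (S j))"
    using sum_change_one[of j "{1..n}" "\<lambda>i. v i ((S(j := S j \<union> {x})) i)" "\<lambda>i. v i (S i)"] step.hyps(2) by auto
  have monoj: "v j (S j) \<le> v j (S j \<union> {x})"
  proof -
    have "valuation {1..m} (v j)" using step.prems(3) step.hyps(2) by blast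
    moreover have "S j \<union> {x} \<subseteq> {1..m}" using Ssub[of j] km by auto
    ultimately show ?thesis using val_mono[of "{1..m}" "v j" "S j" "S j \<union> {x}"] by blast
  qed
  show ?case
  proof (intro allI impI)
    fix B T'
    assume H: "(\<forall>i\<in>{1..n}. (S(j := S j \<union> {Suc k})) i \<subseteq> B i \<and> B i \<subseteq> {1..m} \<and> T' i \<subseteq> {1..Suc k}) \<and>
         (\<forall>i\<in>{1..n}. \<forall>j\<in>{1..n}. i \<noteq> j \<longrightarrow> T' i \<inter> T' j = {})"
    have SB: "\<forall>i\<in>{1..n}. S i \<subseteq> B i" using H by (auto split: if_splits)
    show "(\<Sum>i=1..n. v i (B i \<union> T' i) - v i (B i)) \<le> a * (\<Sum>i=1..n. v i ((S(j := S j \<union> {Suc k})) i))"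
    proof (cases "\<exists>l\<in>{1..n}. x \<in> T' l")
      case True
      then obtain l where l: "l \<in> {1..n}" "x \<in> T' l" by auto
      define T where "T = T'(l := T' l - {x})"
      have "\<forall>i\<in>{1..n}. S i \<subseteq> B i \<and> B i \<subseteq> {1..m} \<and> T i \<subseteq> {1..k}"
      proof
        fix i assume i: "i \<in> {1..n}"
        show "S i \<subseteq> B i \<and> B i \<subseteq> {1..m} \<and> T i \<subseteq> {1..k}"
        proof (cases "i = l")
          case True
          have "T' l \<subseteq> {1..Suc k}" using H l by blast
          then have "T' l - {x} \<subseteq> {1..k}" using x_def by auto
          moreover have "B i \<subseteq> {1..m}" using H i by blast
          ultimately show ?thesis using SB i True unfolding T_def by auto
        next
          case False
          then have "x \<notin> T' i" using H l i by blast
          moreover have "T' i \<subseteq> {1..Suc k}" using H i by blast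
          ultimately have "T' i \<subseteq> {1..k}" using x_def sub_Suc by blast
          moreover have "B i \<subseteq> {1..m}" using H i by blast
          ultimately show ?thesis using SB i False unfolding T_def by auto
        qed
      qed
      moreover have "\<forall>i\<in>{1..n}. \<forall>j\<in>{1..n}. i\<noteq>j \<longrightarrow> T i \<inter> T j = {}"
      proof -
        have TT: "\<And>i. T i \<subseteq> T' i" unfolding T_def by auto
        have "\<forall>i\<in>{1..n}. \<forall>j\<in>{1..n}. i\<noteq>j \<longrightarrow> T' i \<inter> T' j = {}" using H by blast
        then show ?thesis using TT by blast
      qed
      ultimately have I: "(\<Sum>i=1..n. v i (B i \<union> T i) - v i (B i)) \<le> a * (\<Sum>i=1..n. v i (S i))"
        using IH by blast
      have E1: "(\<Sum>i=1..n. v i (B i \<union> T' i) - v i (B i)) = (\<Sum>i=1..n. v i (B i \<union> T i) - v i (B i))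
          + ((v l (B l \<union> T' l) - v l (B l)) - (v l (B l \<union> T l) - v l (B l)))"
        using sum_change_one[of l "{1..n}" "\<lambda>i. v i (B i \<union> T' i) - v i (B i)" "\<lambda>i. v i (B i \<union> T i) - v i (B i)"] l by (auto simp: T_def)
      have E2: "B l \<union> T' l = (B l \<union> T l) \<union> {x}" using l unfolding T_def by auto
      have A1: "v l ((B l \<union> T l) \<union> {x}) - v l (B l \<union> T l) \<le> a * (v l (S l \<union> {x}) - v l (S l))"
      proof (rule asub)
        show "a_submodular a {1..m} (v l)" using step.prems(3) l by auto
        show "S l \<subseteq> B l \<union> T l" using SB l by auto
        have "T' l \<subseteq> {1..Suc k}" "B l \<subseteq> {1..m}" using H l by blast+
        moreover have "{1..Suc k} \<subseteq> {1..m}" using km x_def by auto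
        moreover have "T l \<subseteq> T' l" unfolding T_def by auto
        ultimately show "B l \<union> T l \<subseteq> {1..m}" by blast
      qed (use km xS in auto)
      have A2: "a * (v l (S l \<union> {x}) - v l (S l)) \<le> a * (v j (S j \<union> {x}) - v j (S j))"
        using gr l step.prems(2) by (simp add: mult_left_mono)
      have E3: "a * (\<Sum>i=1..n. v i ((S(j := S j \<union> {x})) i)) = a * (\<Sum>i=1..n. v i (S i)) + a * (v j (S j \<union> {x}) - v j (S j))"
        using sumS by (simp add: distrib_left)
      have "(\<Sum>i=1..n. v i (B i \<union> T' i) - v i (B i)) \<le> a * (\<Sum>i=1..n. v i ((S(j := S j \<union> {x})) i))"
        unfolding E3 E1 E2 using I A1 A2 by linarith
      then show ?thesis using x_def by simp
    next
      case False
      have "\<forall>i\<in>{1..n}. S i \<subseteq> B i \<and> B i \<subseteq> {1..m} \<and> T' i \<subseteq> {1..k}"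
      proof
        fix i assume i: "i \<in> {1..n}"
        have "x \<notin> T' i" using False i by blast
        moreover have "T' i \<subseteq> {1..Suc k}" using H i by blast
        ultimately have "T' i \<subseteq> {1..k}" using x_def sub_Suc by blast
        moreover have "B i \<subseteq> {1..m}" using H i by blast
        ultimately show "S i \<subseteq> B i \<and> B i \<subseteq> {1..m} \<and> T' i \<subseteq> {1..k}" using SB i by auto
      qed
      then have I: "(\<Sum>i=1..n. v i (B i \<union> T' i) - v i (B i)) \<le> a * (\<Sum>i=1..n. v i (S i))"
        using IH H by blast
      have "a * (\<Sum>i=1..n. v i (S i)) \<le> a * (\<Sum>i=1..n. v i ((S(j := S j \<union> {x})) i))"
        using sumS monoj step.prems(2) by (simp add: mult_left_mono)
      then show ?thesis using I x_def by simp
    qed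
  qed
qed

theorem theorem13:
  fixes a :: real and n m :: nat and v :: "nat \<Rightarrow> nat set \<Rightarrow> real"
    and S T :: "nat \<Rightarrow> nat set"
  assumes "a \<ge> 1" and "n \<ge> 1"
    and "\<forall>i\<in>{1..n}. valuation {1..m} (v i) \<and> a_submodular a {1..m} (v i)"
    and "greedy_alloc v n m S"
    and "(\<Union>i\<in>{1..n}. T i) = {1..m}"
    and "\<forall>i\<in>{1..n}. \<forall>j\<in>{1..n}. i \<noteq> j \<longrightarrow> T i \<inter> T j = {}"
  shows "(\<Sum>i=1..n. v i (S i)) \<ge> (1 / (1 + a)) * (\<Sum>i=1..n. v i (T i))"
proof -
  have Ssub: "\<And>i. S i \<subseteq> {1..m}" using greedy_sub[OF assms(4)] .
  have Tsub: "\<forall>i\<in>{1..n}. T i \<subseteq> {1..m}" using assms(5) by blast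
  have "(\<Sum>i=1..n. v i (S i \<union> T i) - v i (S i)) \<le> a * (\<Sum>i=1..n. v i (S i))"
    using inv[OF assms(4) order_refl _ assms(3)] assms(1,6) Ssub Tsub by auto
  moreover have "(\<Sum>i=1..n. v i (T i)) \<le> (\<Sum>i=1..n. v i (S i \<union> T i))"
  proof (rule sum_mono)
    fix i assume i: "i \<in> {1..n}"
    have "valuation {1..m} (v i)" using assms(3) i by blast
    then show "v i (T i) \<le> v i (S i \<union> T i)" by (rule val_mono) (use i Ssub Tsub in auto)
  qed
  ultimately have "(\<Sum>i=1..n. v i (T i)) \<le> (1 + a) * (\<Sum>i=1..n. v i (S i))"
    by (simp add: sum_subtractf algebra_simps)
  then show ?thesis using assms(1) by (simp add: field_simps)
qed

end
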